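(* For every $x\in\mathbb T^3\setminus\mathfrak I$, the collisional invariant region $\mathcal S(x)$ is Lebesgue measurable.
   Context: $\mathbb{T}^3=\mathbb{R}^3/\mathbb{Z}^3$; $\omega(k)=\omega_0+\sum_{j=1}^3 2(1-\cos(2\pi k^j))$ with fixed $2<\omega_0<3$. Two wave vectors $x,y\in\mathbb{T}^3$ are connected by one collision if $\omega(y)=\omega(x)+\omega(y-x)$, or $\omega(x)=\omega(y)+\omega(x-y)$, or $\omega(x+y)=\omega(x)+\omega(y)$. The no-collision region $\mathfrak I$ is the set of $x\in\mathbb T^3$ such that no $y\in\mathbb T^3$ is connected to $x$ by one collision. For $x\in\mathbb T^3\setminus\mathfrak I$: $\mathcal S^1(x)$ is the set of $y$ connected to $x$ by one collision, $\mathcal S^n(x)=\bigcup_{z\in\mathcal S^{n-1}(x)}\mathcal S^1(z)$ for $n\ge2$, and $\mathcal S(x)=\bigcup_{n\ge1}\mathcal S^n(x)$. *)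

theory Defs
  imports "HOL-Analysis.Analysis"
begin

text \<open>The torus T^3 = R^3/Z^3 is represented by R^3 (type real^3); all notions below
  are Z^3-periodic, so a subset of T^3 is represented by its (periodic) preimage in R^3.
  Lebesgue measurability on T^3 corresponds to Lebesgue measurability of this preimage.\<close>

definition omega :: "real \<Rightarrow> real^3 \<Rightarrow> real" where
  "omega w0 k = w0 + (\<Sum>j\<in>UNIV. 2 * (1 - cos (2 * pi * (k $ j))))"

definition collides :: "real \<Rightarrow> real^3 \<Rightarrow> real^3 \<Rightarrow> bool" where
  "collides w0 x y \<longleftrightarrow>
     omega w0 y = omega w0 x + omega w0 (y - x) \<or>
     omega w0 x = omega w0 y + omega w0 (x - y) \<or>
     omega w0 (x + y) = omega w0 x + omega w0 y"

definition noCollision :: "real \<Rightarrow> (real^3) set" where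
  "noCollision w0 = {x. \<not> (\<exists>y. collides w0 x y)}"

definition S1 :: "real \<Rightarrow> real^3 \<Rightarrow> (real^3) set" where
  "S1 w0 x = {y. collides w0 x y}"

text \<open>Siter w0 n x is S^(n+1)(x).\<close>
primrec Siter :: "real \<Rightarrow> nat \<Rightarrow> real^3 \<Rightarrow> (real^3) set" where
  "Siter w0 0 x = S1 w0 x"
| "Siter w0 (Suc n) x = (\<Union>z\<in>Siter w0 n x. S1 w0 z)"

definition Sinv :: "real \<Rightarrow> real^3 \<Rightarrow> (real^3) set" where
  "Sinv w0 x = (\<Union>n. Siter w0 n x)"

end

theory Submission
  imports Defs
begin

lemma proj_closed:
  fixes K :: "'a::metric_space set" and C :: "('a \<times> 'b::metric_space) set"
  assumes K: "compact K" and C: "closed C"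
  shows "closed {y. \<exists>z\<in>K. (z,y)\<in>C}"
  unfolding closed_sequential_limits
proof (intro allI impI, elim conjE)
  fix s l assume s: "\<forall>n. s n \<in> {y. \<exists>z\<in>K. (z,y)\<in>C}" and l: "s \<longlonglongrightarrow> l"
  have "\<forall>n. \<exists>z. z \<in> K \<and> (z, s n) \<in> C" using s by blast
  then have "\<exists>f. \<forall>n. f n \<in> K \<and> (f n, s n) \<in> C" by (rule choice)
  then obtain f where f: "\<forall>n. f n \<in> K \<and> (f n, s n) \<in> C" by blast
  have fK: "\<forall>n. f n \<in> K" using f by blast
  obtain z r where z: "z \<in> K" "strict_mono r" "(f \<circ> r) \<longlonglongrightarrow> z"
    using seq_compactE[OF compact_imp_seq_compact[OF K] fK] by blast
  have lim: "(\<lambda>n. (f (r n), s (r n))) \<longlonglongrightarrow> (z, l)"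
    using z(3) LIMSEQ_subseq_LIMSEQ[OF l z(2)] by (intro tendsto_Pair) (auto simp: o_def)
  have mem: "\<And>n. (f (r n), s (r n)) \<in> C" using f by blast
  have "(z,l) \<in> C" by (rule closed_sequentially[OF C mem lim])
  then show "l \<in> {y. \<exists>z\<in>K. (z,y)\<in>C}" using z by blast
qed

lemma omega_cont: "continuous_on UNIV (omega w0)"
  unfolding omega_def by (intro continuous_intros)

lemma omega_shift:
  assumes "\<forall>j. m $ j \<in> \<int>"
  shows "omega w0 (k + m) = omega w0 k"
proof -
  have "cos (2 * pi * ((k + m) $ j)) = cos (2 * pi * (k $ j))" for j
  proof -
    obtain n where n: "m $ j = of_int n" using assms Ints_cases by metis
    have "2 * pi * ((k + m) $ j) = 2 * pi * (k $ j) + (2*pi) * of_int n"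
      by (simp add: n algebra_simps)
    then show ?thesis by (simp only: cos_add cos_int_2pin sin_int_2pin)
  qed
  then show ?thesis unfolding omega_def by simp
qed

lemma collides_shift2:
  assumes "\<forall>j. m $ j \<in> \<int>"
  shows "collides w0 z (y + m) = collides w0 z y"
proof -
  have "y + m - z = (y - z) + m" "z - (y + m) = (z - y) + (-m)" "z + (y+m) = (z+y) + m"
    by (auto simp: algebra_simps)
  moreover have "\<forall>j. (-m) $ j \<in> \<int>" using assms by simp
  ultimately show ?thesis unfolding collides_def
    by (simp only: omega_shift[OF assms] omega_shift[OF \<open>\<forall>j. (-m) $ j \<in> \<int>\<close>])
qed

lemma collides_shift1:
  assumes "\<forall>j. m $ j \<in> \<int>"
  shows "collides w0 (z + m) y = collides w0 z y"
proof -
  have "y - (z + m) = (y - z) + (-m)" "z + m - y = (z - y) + m" "z + m + y = (z+y) + m"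
    by (auto simp: algebra_simps)
  moreover have "\<forall>j. (-m) $ j \<in> \<int>" using assms by simp
  ultimately show ?thesis unfolding collides_def
    by (simp only: omega_shift[OF assms] omega_shift[OF \<open>\<forall>j. (-m) $ j \<in> \<int>\<close>])
qed

lemma omega_comp: "continuous_on UNIV f \<Longrightarrow> continuous_on UNIV (\<lambda>p. omega w0 (f p))"
  using continuous_on_compose2[OF omega_cont, of UNIV f] by auto

lemma closed_coll: "closed {p::((real^3) \<times> (real^3)). collides w0 (fst p) (snd p)}"
proof -
  have c1: "continuous_on UNIV (\<lambda>p::((real^3) \<times> (real^3)). omega w0 (snd p))"
    "continuous_on UNIV (\<lambda>p::((real^3) \<times> (real^3)). omega w0 (fst p))"
    "continuous_on UNIV (\<lambda>p::((real^3) \<times> (real^3)). omega w0 (snd p - fst p))"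
    "continuous_on UNIV (\<lambda>p::((real^3) \<times> (real^3)). omega w0 (fst p - snd p))"
    "continuous_on UNIV (\<lambda>p::((real^3) \<times> (real^3)). omega w0 (fst p + snd p))"
    by (intro omega_comp continuous_intros)+
  have "closed {p::((real^3) \<times> (real^3)). omega w0 (snd p) = omega w0 (fst p) + omega w0 (snd p - fst p)
     \<or> omega w0 (fst p) = omega w0 (snd p) + omega w0 (fst p - snd p)
     \<or> omega w0 (fst p + snd p) = omega w0 (fst p) + omega w0 (snd p)}"
    by (intro closed_Collect_disj closed_Collect_eq continuous_on_add c1 closed_UNIV)
  then show ?thesis unfolding collides_def .
qed

lemma Siter_periodic:
  assumes "\<forall>j. m $ j \<in> \<int>"
  shows "y + m \<in> Siter w0 n x \<longleftrightarrow> y \<in> Siter w0 n x"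
  by (induction n arbitrary: y) (auto simp: S1_def collides_shift2[OF assms])

lemma Siter_closed: "closed (Siter w0 n x)"
proof (induction n)
  case 0
  have "S1 w0 x = {y. \<exists>z\<in>{x}. (z,y) \<in> {p. collides w0 (fst p) (snd p)}}"
    by (auto simp: S1_def)
  then show ?case using proj_closed[OF compact_sing closed_coll] by simp
next
  case (Suc n)
  let ?C = "(Siter w0 n x \<times> UNIV) \<inter> {p::((real^3) \<times> (real^3)). collides w0 (fst p) (snd p)}"
  have cC: "closed ?C" using Suc closed_coll closed_Times closed_UNIV closed_Int by blast
  have eq: "Siter w0 (Suc n) x = {y. \<exists>z\<in>cbox 0 1. (z,y) \<in> ?C}"
  proof
    show "{y. \<exists>z\<in>cbox 0 1. (z,y) \<in> ?C} \<subseteq> Siter w0 (Suc n) x" by (auto simp: S1_def)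
    show "Siter w0 (Suc n) x \<subseteq> {y. \<exists>z\<in>cbox 0 1. (z,y) \<in> ?C}"
    proof
      fix y assume "y \<in> Siter w0 (Suc n) x"
      then obtain z where z: "z \<in> Siter w0 n x" "collides w0 z y" by (auto simp: S1_def)
      define m :: "real^3" where "m = (\<chi> j. - of_int (floor (z $ j)))"
      have mi: "\<forall>j. m $ j \<in> \<int>" by (simp add: m_def)
      have "z + m \<in> cbox 0 1"
      proof -
        have "0 \<le> z $ j - of_int (floor (z $ j)) \<and> z $ j - of_int (floor (z $ j)) \<le> 1" for j
          using of_int_floor_le[of "z $ j"] real_of_int_floor_add_one_gt[of "z $ j"] by linarith
        then show ?thesis unfolding mem_box_cart m_def by simp
      qed
      moreover have "z + m \<in> Siter w0 n x" using z Siter_periodic[OF mi] by blast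
      moreover have "collides w0 (z + m) y" using z collides_shift1[OF mi] by blast
      ultimately show "y \<in> {y. \<exists>z\<in>cbox 0 1. (z,y) \<in> ?C}" by auto
    qed
  qed
  show ?case unfolding eq by (rule proj_closed[OF compact_cbox cC])
qed

theorem mainTheorem5:
  fixes w0 :: real and x :: "real^3"
  assumes "2 < w0" and "w0 < 3"
    and "x \<notin> noCollision w0"
  shows "Sinv w0 x \<in> sets lebesgue"
proof -
  have "\<And>n. Siter w0 n x \<in> sets lebesgue"
    using Siter_closed borel_closed sets_completionI_sets sets_lborel by metis
  then show ?thesis unfolding Sinv_def by auto
qed

end
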